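(* Let $n\ge1$. If $K$ is an $\mathcal{N}$-set in $\mathbb{R}^n$, then $A=(K-K)\cap\mathbb{Z}^n$ is a finite set of lattice points which generates the additive group $\mathbb{Z}^n$.
   Context: $K-K=\{x-y : x,y\in K\}$. An $\mathcal{N}$-set in $\mathbb{R}^n$ is a compact set $K\subseteq\mathbb{R}^n$ such that for every $x\in\mathbb{R}^n$ there exists $y\in K$ with $x-y\in\mathbb{Z}^n$. *)

theory Defs
  imports "HOL-Analysis.Analysis"
begin

definition lattice_pts :: "(real ^ 'n) set" where
  "lattice_pts = {x. \<forall>i. x $ i \<in> \<int>}"

text \<open>An N-set: compact set meeting every coset x + Z^n.\<close>
definition N_set :: "(real ^ 'n) set \<Rightarrow> bool" where
  "N_set K \<longleftrightarrow> compact K \<and> (\<forall>x. \<exists>y\<in>K. x - y \<in> lattice_pts)"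

definition diff_set :: "('a::ab_group_add) set \<Rightarrow> 'a set" where
  "diff_set K = {x - y | x y. x \<in> K \<and> y \<in> K}"

definition add_subgroup :: "('a::ab_group_add) set \<Rightarrow> bool" where
  "add_subgroup H \<longleftrightarrow> 0 \<in> H \<and> (\<forall>x\<in>H. \<forall>y\<in>H. x + y \<in> H) \<and> (\<forall>x\<in>H. - x \<in> H)"

definition gen_add_subgroup :: "('a::ab_group_add) set \<Rightarrow> 'a set" where
  "gen_add_subgroup A = \<Inter>{H. add_subgroup H \<and> A \<subseteq> H}"

end

theory Submission
  imports Defs
begin

lemma lattice_closed:
  fixes S :: "(real ^ 'n) set"
  assumes "S \<subseteq> lattice_pts"
  shows "closed S"
proof (rule discrete_imp_closed[of 1])
  show "\<forall>x\<in>S. \<forall>y\<in>S. dist y x < 1 \<longrightarrow> y = x"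
  proof (intro ballI impI)
    fix x y assume xy: "x \<in> S" "y \<in> S" "dist y x < 1"
    show "y = x"
    proof (subst vec_eq_iff, rule allI)
      fix i
      have "\<bar>(y - x) $ i\<bar> \<le> norm (y - x)" by (rule component_le_norm_cart)
      also have "\<dots> < 1" using xy(3) by (simp add: dist_norm)
      finally have a: "\<bar>y $ i - x $ i\<bar> < 1" by simp
      have "y $ i \<in> \<int>" "x $ i \<in> \<int>" using xy assms unfolding lattice_pts_def by auto
      then have "y $ i - x $ i \<in> \<int>" by simp
      with a have "y $ i - x $ i = 0" using Ints_nonzero_abs_less1 by blast
      then show "y $ i = x $ i" by simp
    qed
  qed
qed simp

lemma lattice_bounded_finite:
  fixes S :: "(real ^ 'n) set"
  assumes "bounded S"
  shows "finite (S \<inter> lattice_pts)"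
proof -
  obtain B where B: "\<forall>x\<in>S. norm x \<le> B" using assms bounded_iff by blast
  define N where "N = \<lceil>B\<rceil>"
  define g where "g = (\<lambda>x::real^'n. \<lambda>i. \<lfloor>x $ i\<rfloor>)"
  have inj: "inj_on g (S \<inter> lattice_pts)"
  proof (rule inj_onI)
    fix x y assume "x \<in> S \<inter> lattice_pts" "y \<in> S \<inter> lattice_pts" "g x = g y"
    then have "\<forall>i. x $ i = y $ i"
      unfolding lattice_pts_def g_def
      by (metis (mono_tags, lifting) IntD2 Ints_cases floor_of_int mem_Collect_eq)
    then show "x = y" by (simp add: vec_eq_iff)
  qed
  have sub: "g ` (S \<inter> lattice_pts) \<subseteq> {f. \<forall>i. (i \<in> UNIV \<longrightarrow> f i \<in> {-N..N}) \<and> (i \<notin> UNIV \<longrightarrow> f i = 0)}"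
  proof clarsimp
    fix x i assume x: "x \<in> S" "x \<in> lattice_pts"
    have "\<bar>x $ i\<bar> \<le> B" using B x component_le_norm_cart order_trans by blast
    then show "- N \<le> g x i \<and> g x i \<le> N" unfolding g_def N_def
      by (smt (verit, ccfv_SIG) ceiling_correct floor_le_ceiling floor_mono le_floor_iff of_int_minus)
  qed
  have "finite {f::'n \<Rightarrow> int. \<forall>i. (i \<in> UNIV \<longrightarrow> f i \<in> {-N..N}) \<and> (i \<notin> UNIV \<longrightarrow> f i = 0)}"
    by (rule finite_set_of_finite_funs) auto
  then have "finite (g ` (S \<inter> lattice_pts))" using sub by (rule finite_subset[rotated])
  then show ?thesis using inj by (rule finite_imageD)
qed

theorem mainTheorem8:
  fixes K :: "(real ^ 'n) set"
  assumes "N_set K"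
  shows "finite (diff_set K \<inter> lattice_pts)
       \<and> gen_add_subgroup (diff_set K \<inter> lattice_pts) = lattice_pts"
proof -
  have cK: "compact K" and cov: "\<And>x. \<exists>y\<in>K. x - y \<in> lattice_pts"
    using assms unfolding N_set_def by auto
  have L0: "(0::real^'n) \<in> lattice_pts" unfolding lattice_pts_def by simp
  have Ldiff: "a - b \<in> lattice_pts" if "a \<in> lattice_pts" "b \<in> lattice_pts" for a b :: "real^'n"
    using that unfolding lattice_pts_def by auto
  have Ladd: "a + b \<in> lattice_pts" if "a \<in> lattice_pts" "b \<in> lattice_pts" for a b :: "real^'n"
    using that unfolding lattice_pts_def by auto
  have Lneg: "- a \<in> lattice_pts" if "a \<in> lattice_pts" for a :: "real^'n"
    using that unfolding lattice_pts_def by auto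
  define A where "A = diff_set K \<inter> lattice_pts"
  have "compact (diff_set K)" unfolding diff_set_def using compact_differences[OF cK cK] .
  then have fin: "finite A" unfolding A_def
    by (intro lattice_bounded_finite compact_imp_bounded)
  have sub1: "gen_add_subgroup A \<subseteq> lattice_pts"
  proof -
    have "add_subgroup (lattice_pts :: (real^'n) set)" unfolding add_subgroup_def using L0 Ladd Lneg by blast
    moreover have "A \<subseteq> lattice_pts" unfolding A_def by blast
    ultimately have "lattice_pts \<in> {H. add_subgroup H \<and> A \<subseteq> H}" by simp
    then show ?thesis unfolding gen_add_subgroup_def by (rule Inter_lower)
  qed
  have sub2: "lattice_pts \<subseteq> gen_add_subgroup A"
  proof
    fix m :: "real^'n" assume mL: "m \<in> lattice_pts"
    show "m \<in> gen_add_subgroup A"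
      unfolding gen_add_subgroup_def
    proof (rule InterI, clarify)
      fix H assume Hs: "add_subgroup H" and AH: "A \<subseteq> H"
      have Hadd: "a + b \<in> H" if "a \<in> H" "b \<in> H" for a b
        using Hs that unfolding add_subgroup_def by blast
      have Hneg: "- a \<in> H" if "a \<in> H" for a
        using Hs that unfolding add_subgroup_def by blast
      have H0: "0 \<in> H" using Hs unfolding add_subgroup_def by blast
      have inA: "a - b \<in> H" if "a \<in> K" "b \<in> K" "a - b \<in> lattice_pts" for a b :: "real^'n"
        using that AH unfolding A_def diff_set_def by blast
      obtain y0 where y0: "y0 \<in> K" "0 - y0 \<in> lattice_pts" using cov by blast
      define G1 where "G1 = {h\<in>lattice_pts. h + y0 \<in> H}"
      define G2 where "G2 = {h\<in>lattice_pts. h + y0 \<notin> H}"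
      define f where "f = (\<lambda>p::real \<times> (real^'n). fst p *\<^sub>R m - snd p)"
      have fc: "continuous (at x) f" for x
        unfolding f_def by (intro continuous_intros)
      define S1 where "S1 = fst ` (({0..1} \<times> K) \<inter> f -` G1)"
      define S2 where "S2 = fst ` (({0..1} \<times> K) \<inter> f -` G2)"
      have cl1: "closed S1" unfolding S1_def
        apply (rule compact_imp_closed, rule compact_continuous_image)
         apply (rule continuous_on_fst[OF continuous_on_id])
        apply (rule compact_Int_closed)
         apply (rule compact_Times) using cK apply auto[2]
        apply (rule continuous_closed_vimage[OF _ fc])
        apply (rule lattice_closed) unfolding G1_def by blast
      have cl2: "closed S2" unfolding S2_def
        apply (rule compact_imp_closed, rule compact_continuous_image)
         apply (rule continuous_on_fst[OF continuous_on_id])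
        apply (rule compact_Int_closed)
         apply (rule compact_Times) using cK apply auto[2]
        apply (rule continuous_closed_vimage[OF _ fc])
        apply (rule lattice_closed) unfolding G2_def by blast
      have mem1: "t \<in> S1 \<longleftrightarrow> t \<in> {0..1} \<and> (\<exists>y\<in>K. t *\<^sub>R m - y \<in> G1)" for t
      proof
        assume "t \<in> S1" then show "t \<in> {0..1} \<and> (\<exists>y\<in>K. t *\<^sub>R m - y \<in> G1)"
          unfolding S1_def f_def by auto
      next
        assume "t \<in> {0..1} \<and> (\<exists>y\<in>K. t *\<^sub>R m - y \<in> G1)"
        then obtain y where "t \<in> {0..1}" "y \<in> K" "t *\<^sub>R m - y \<in> G1" by blast
        then have "(t, y) \<in> ({0..1} \<times> K) \<inter> f -` G1" unfolding f_def by simp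
        then show "t \<in> S1" unfolding S1_def by (metis fst_conv image_eqI)
      qed
      have mem2: "t \<in> S2 \<longleftrightarrow> t \<in> {0..1} \<and> (\<exists>y\<in>K. t *\<^sub>R m - y \<in> G2)" for t
      proof
        assume "t \<in> S2" then show "t \<in> {0..1} \<and> (\<exists>y\<in>K. t *\<^sub>R m - y \<in> G2)"
          unfolding S2_def f_def by auto
      next
        assume "t \<in> {0..1} \<and> (\<exists>y\<in>K. t *\<^sub>R m - y \<in> G2)"
        then obtain y where "t \<in> {0..1}" "y \<in> K" "t *\<^sub>R m - y \<in> G2" by blast
        then have "(t, y) \<in> ({0..1} \<times> K) \<inter> f -` G2" unfolding f_def by simp
        then show "t \<in> S2" unfolding S2_def by (metis fst_conv image_eqI)
      qed
      have cover: "{0..1} \<subseteq> S1 \<union> S2"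
      proof
        fix t :: real assume t: "t \<in> {0..1}"
        obtain y where "y \<in> K" "t *\<^sub>R m - y \<in> lattice_pts" using cov by blast
        then show "t \<in> S1 \<union> S2" using t mem1 mem2 unfolding G1_def G2_def by blast
      qed
      have disj: "S1 \<inter> S2 \<inter> {0..1} = {}"
      proof (rule ccontr)
        assume "S1 \<inter> S2 \<inter> {0..1} \<noteq> {}"
        then obtain t where "t \<in> S1" "t \<in> S2" by blast
        then obtain y1 y2 where y: "y1 \<in> K" "y2 \<in> K" "t *\<^sub>R m - y1 \<in> G1" "t *\<^sub>R m - y2 \<in> G2"
          using mem1 mem2 by blast
        have "y1 - y2 = (t *\<^sub>R m - y2) - (t *\<^sub>R m - y1)" by simp
        moreover have "(t *\<^sub>R m - y2) - (t *\<^sub>R m - y1) \<in> lattice_pts"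
          using Ldiff[of "t *\<^sub>R m - y2" "t *\<^sub>R m - y1"] y unfolding G1_def G2_def by blast
        ultimately have "y1 - y2 \<in> lattice_pts" by simp
        then have "y1 - y2 \<in> H" using inA y by blast
        moreover have "t *\<^sub>R m - y1 + y0 \<in> H" using y unfolding G1_def by blast
        ultimately have "(t *\<^sub>R m - y1 + y0) + (y1 - y2) \<in> H" using Hadd by blast
        moreover have "(t *\<^sub>R m - y1 + y0) + (y1 - y2) = t *\<^sub>R m - y2 + y0" by simp
        ultimately show False using y unfolding G2_def by auto
      qed
      have "0 *\<^sub>R m - y0 \<in> G1" using y0 H0 unfolding G1_def by simp
      then have "0 \<in> S1" using mem1 y0 by auto
      have "S2 \<inter> {0..1} = {}"
      proof (rule ccontr)
        assume ne: "S2 \<inter> {0..1} \<noteq> {}"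
        have "connected {0..1::real}" by simp
        moreover have "S1 \<inter> {0..1} \<noteq> {}" using \<open>0 \<in> S1\<close> by auto
        ultimately show False
          using connected_closed[of "{0..1::real}"] cl1 cl2 cover disj ne by blast
      qed
      moreover have "(1::real) \<in> {0..1}" by simp
      ultimately have "1 \<in> S1" using cover by blast
      then obtain y where y: "y \<in> K" "m - y \<in> lattice_pts" "m - y + y0 \<in> H"
        using mem1 unfolding G1_def by auto
      have "y - y0 = (m - (m - y)) + (0 - y0)" by simp
      moreover have "m - (m - y) \<in> lattice_pts" using Ldiff mL y by blast
      ultimately have "y - y0 \<in> lattice_pts" using Ladd y0 by metis
      then have "y - y0 \<in> H" using inA y y0 by blast
      then have "(m - y + y0) + (y - y0) \<in> H" using Hadd y by blast
      then show "m \<in> H" by simp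
    qed
  qed
  show ?thesis using fin sub1 sub2 unfolding A_def by blast
qed

end
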